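(* Consider the set $T$ of triples $(f_2,f_3,f_4)$ of forms in $\mathbb{R}[x,y]$ with $\deg(f_i)=i$ for which there exist a real number $t\ne0$ and forms $\xi,\eta\in\mathbb{R}[x,y]$ of degrees $2$ and $3$ with $\eta^2=(f_2-t\xi)(4f_4-\xi^2)-f_3^2=:g_t(\xi)$ such that $g_t(\xi)$ and $h_t(\xi):=3t\xi^2-2f_2\xi-4tf_4$ have a common irreducible quadratic factor in $\mathbb{R}[x,y]$. Then $T$ is not Zariski dense in the real vector space of triples of binary forms of degrees $2,3,4$; that is, there is a nonzero polynomial in the coefficients of $f_2,f_3,f_4$ vanishing on all of $T$. *)

theory Defs
  imports "HOL-Computational_Algebra.Polynomial_Factorial"
begin

text \<open>The ring R[x,y] is represented as (R[x])[y], i.e. the type real poly poly: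
  the outer variable is y, the inner one is x.  The monomial x^i y^j of a
  bivariate polynomial f has coefficient poly.coeff (coeff f j) i.\<close>

type_synonym bpoly = "real poly poly"

definition form_of_degree :: "nat \<Rightarrow> bpoly \<Rightarrow> bool" where
  "form_of_degree d f \<longleftrightarrow> f \<noteq> 0 \<and>
     (\<forall>i j. poly.coeff (coeff f j) i \<noteq> 0 \<longrightarrow> i + j = d)"

definition bconst :: "real \<Rightarrow> bpoly" where
  "bconst t = [:[:t:]:]"

definition form_coeff :: "nat \<Rightarrow> bpoly \<Rightarrow> nat \<Rightarrow> real" where
  "form_coeff d f j = poly.coeff (coeff f j) (d - j)"

definition triple_coords :: "bpoly \<Rightarrow> bpoly \<Rightarrow> bpoly \<Rightarrow> nat \<Rightarrow> real" where
  "triple_coords f2 f3 f4 k =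
     (if k < 3 then form_coeff 2 f2 k
      else if k < 7 then form_coeff 3 f3 (k - 3)
      else form_coeff 4 f4 (k - 7))"

text \<open>A polynomial in the 12 variables v_0..v_11 is given by its coefficient function
  c on exponent vectors alpha (alpha i = exponent of v_i), with finite support and only
  exponents on the variables 0..11.\<close>
definition poly12 :: "((nat \<Rightarrow> nat) \<Rightarrow> real) \<Rightarrow> bool" where
  "poly12 c \<longleftrightarrow> finite {\<alpha>. c \<alpha> \<noteq> 0} \<and> (\<forall>\<alpha> i. c \<alpha> \<noteq> 0 \<longrightarrow> i \<ge> 12 \<longrightarrow> \<alpha> i = 0)"

definition eval12 :: "((nat \<Rightarrow> nat) \<Rightarrow> real) \<Rightarrow> (nat \<Rightarrow> real) \<Rightarrow> real" where
  "eval12 c v = (\<Sum>\<alpha>\<in>{\<alpha>. c \<alpha> \<noteq> 0}. c \<alpha> * (\<Prod>i<12. v i ^ \<alpha> i))"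

definition g_t :: "bpoly \<Rightarrow> bpoly \<Rightarrow> bpoly \<Rightarrow> real \<Rightarrow> bpoly \<Rightarrow> bpoly" where
  "g_t f2 f3 f4 t \<xi> = (f2 - bconst t * \<xi>) * (4 * f4 - \<xi>^2) - f3^2"

definition h_t :: "bpoly \<Rightarrow> bpoly \<Rightarrow> real \<Rightarrow> bpoly \<Rightarrow> bpoly" where
  "h_t f2 f4 t \<xi> = 3 * bconst t * \<xi>^2 - 2 * f2 * \<xi> - 4 * bconst t * f4"

definition in_T :: "bpoly \<Rightarrow> bpoly \<Rightarrow> bpoly \<Rightarrow> bool" where
  "in_T f2 f3 f4 \<longleftrightarrow> form_of_degree 2 f2 \<and> form_of_degree 3 f3 \<and> form_of_degree 4 f4 \<and>
     (\<exists>t \<xi> \<eta>. t \<noteq> 0 \<and> form_of_degree 2 \<xi> \<and> form_of_degree 3 \<eta> \<and>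
        \<eta>^2 = g_t f2 f3 f4 t \<xi> \<and>
        (\<exists>q. form_of_degree 2 q \<and> irreducible q \<and>
              q dvd g_t f2 f3 f4 t \<xi> \<and> q dvd h_t f2 f4 t \<xi>))"

end

theory Submission
  imports Defs "HOL-Library.Function_Algebras" "HOL-Library.FuncSet"
begin


definition scl :: "real \<Rightarrow> ('a \<Rightarrow> real) \<Rightarrow> ('a \<Rightarrow> real)" where
  "scl r f = (\<lambda>x. r * f x)"

interpretation fv: vector_space "scl :: real \<Rightarrow> ('a \<Rightarrow> real) \<Rightarrow> _"
  by unfold_locales (auto simp: scl_def fun_eq_iff algebra_simps)

lemma sum_fun_apply: "(sum F A :: 'a \<Rightarrow> real) x = (\<Sum>v\<in>A. F v x)"
  by (induction A rule: infinite_finite_induct) auto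

lemma exists_dep:
  fixes g :: "'i \<Rightarrow> ('a \<Rightarrow> real)"
  assumes I: "finite I" and S: "finite S" and cs: "card S < card I"
    and sp: "\<And>i. i \<in> I \<Longrightarrow> g i \<in> fv.span S"
  shows "\<exists>c. (\<exists>i\<in>I. c i \<noteq> 0) \<and> (\<forall>x. (\<Sum>i\<in>I. c i * g i x) = 0)"
proof (cases "inj_on g I")
  case False
  then obtain i j where ij: "i \<in> I" "j \<in> I" "i \<noteq> j" "g i = g j"
    by (auto simp: inj_on_def)
  define c where "c = (\<lambda>k. if k = i then 1 else if k = j then -1 else (0::real))"
  have "(\<Sum>k\<in>I. c k * g k x) = c i * g i x + c j * g j x" for x
  proof -
    have "(\<Sum>k\<in>I. c k * g k x) = (\<Sum>k\<in>{i,j}. c k * g k x)"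
      by (rule sum.mono_neutral_right) (use I ij in \<open>auto simp: c_def\<close>)
    also have "\<dots> = c i * g i x + c j * g j x" using ij by simp
    finally show ?thesis .
  qed
  then show ?thesis using ij by (intro exI[of _ c]) (auto simp: c_def)
next
  case True
  have sub: "g ` I \<subseteq> fv.span S" using sp by auto
  have cardgi: "card (g ` I) = card I" using True by (simp add: card_image)
  have "\<not> fv.independent (g ` I)"
  proof
    assume "fv.independent (g ` I)"
    from fv.independent_span_bound[OF S this sub] have "card (g ` I) \<le> card S" by simp
    with cardgi cs show False by simp
  qed
  then obtain u where u: "\<exists>v\<in>g ` I. u v \<noteq> 0" "(\<Sum>v\<in>g ` I. scl (u v) v) = 0"
    using fv.dependent_finite[of "g ` I"] I by auto
  show ?thesis
  proof (intro exI[of _ "\<lambda>i. u (g i)"] conjI allI)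
    show "\<exists>i\<in>I. u (g i) \<noteq> 0" using u(1) by auto
    fix x
    have "(\<Sum>i\<in>I. u (g i) * g i x) = (\<Sum>v\<in>g ` I. u v * v x)"
      by (simp add: sum.reindex[OF True])
    also have "\<dots> = (\<Sum>v\<in>g ` I. scl (u v) v) x"
      by (simp add: sum_fun_apply scl_def)
    also have "\<dots> = 0" using u(2) by simp
    finally show "(\<Sum>i\<in>I. u (g i) * g i x) = 0" .
  qed
qed



definition Box :: "nat \<Rightarrow> nat \<Rightarrow> (nat \<Rightarrow> nat) set" where
  "Box k n = {\<beta>. \<forall>j. (j \<in> {..<k} \<longrightarrow> \<beta> j \<in> {..n}) \<and> (j \<notin> {..<k} \<longrightarrow> \<beta> j = 0)}"

lemma finite_Box: "finite (Box k n)"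
  unfolding Box_def by (rule finite_set_of_finite_funs) auto

lemma card_Box: "card (Box k n) = (n+1)^k"
proof -
  define ext where "ext = (\<lambda>(f::nat \<Rightarrow> nat) j. if j < k then f j else 0)"
  have eq: "Box k n = ext ` (PiE {..<k} (\<lambda>_. {..n}))"
  proof
    show "Box k n \<subseteq> ext ` (PiE {..<k} (\<lambda>_. {..n}))"
    proof
      fix \<beta> assume b: "\<beta> \<in> Box k n"
      have "\<beta> = ext (restrict \<beta> {..<k})" using b by (auto simp: ext_def Box_def fun_eq_iff restrict_apply)
      moreover have "restrict \<beta> {..<k} \<in> PiE {..<k} (\<lambda>_. {..n})" using b by (auto simp: Box_def)
      ultimately show "\<beta> \<in> ext ` (PiE {..<k} (\<lambda>_. {..n}))" by blast
    qed
    show "ext ` (PiE {..<k} (\<lambda>_. {..n})) \<subseteq> Box k n"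
      by (auto simp: ext_def Box_def PiE_def Pi_def)
  qed
  have inj: "inj_on ext (PiE {..<k} (\<lambda>_. {..n}))"
  proof (rule inj_onI)
    fix f g assume f: "f \<in> PiE {..<k} (\<lambda>_. {..n})" and g: "g \<in> PiE {..<k} (\<lambda>_. {..n})"
      and e: "ext f = ext g"
    show "f = g"
    proof (rule PiE_ext[OF f g])
      fix x assume "x \<in> {..<k}" then show "f x = g x" using e by (auto simp: ext_def fun_eq_iff dest: spec[of _ x])
    qed
  qed
  show ?thesis unfolding eq card_image[OF inj] by (simp add: card_PiE)
qed

definition mon :: "(nat \<Rightarrow> nat) \<Rightarrow> (nat \<Rightarrow> real) \<Rightarrow> real" where
  "mon \<beta> u = (\<Prod>j<11. u j ^ \<beta> j)"

definition pol :: "nat \<Rightarrow> ((nat \<Rightarrow> real) \<Rightarrow> real) \<Rightarrow> bool" where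
  "pol n f \<longleftrightarrow> f \<in> fv.span (mon ` Box 11 n)"

lemma Box_mono: "a \<le> b \<Longrightarrow> Box k a \<subseteq> Box k b"
  unfolding Box_def by (auto intro: order_trans)

lemma pol_mono_le: "pol a f \<Longrightarrow> a \<le> b \<Longrightarrow> pol b f"
  unfolding pol_def
  by (erule set_mp[OF fv.span_mono, rotated]) (intro image_mono Box_mono)

lemma pol_add: "pol n f \<Longrightarrow> pol n g \<Longrightarrow> pol n (\<lambda>u. f u + g u)"
  unfolding pol_def using fv.span_add[of f _ g] by (simp add: plus_fun_def)

lemma pol_zero: "pol n (\<lambda>u. 0)"
  unfolding pol_def using fv.span_zero by (simp add: zero_fun_def)

lemma pol_scale: "pol n f \<Longrightarrow> pol n (\<lambda>u. c * f u)"
  unfolding pol_def using fv.span_scale[of f _ c] by (simp add: scl_def)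

lemma pol_neg: "pol n f \<Longrightarrow> pol n (\<lambda>u. - f u)"
  using pol_scale[of n f "-1"] by simp

lemma pol_diff: "pol n f \<Longrightarrow> pol n g \<Longrightarrow> pol n (\<lambda>u. f u - g u)"
  using pol_add[of n f "\<lambda>u. - g u"] pol_neg[of n g] by simp

lemma pol_sum: "(\<And>i. i \<in> A \<Longrightarrow> pol n (F i)) \<Longrightarrow> pol n (\<lambda>u. \<Sum>i\<in>A. F i u)"
proof (induction A rule: infinite_finite_induct)
  case (insert x F) then show ?case by (simp add: pol_add)
qed (auto simp: pol_zero)

lemma pol_const: "pol n (\<lambda>u. c)"
proof -
  have "(\<lambda>u. 1) \<in> mon ` Box 11 n"
    by (rule image_eqI[of _ _ "\<lambda>_. 0"]) (auto simp: mon_def Box_def)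
  then have "pol n (\<lambda>u. 1)" unfolding pol_def by (rule fv.span_base)
  from pol_scale[OF this, of c] show ?thesis by simp
qed

lemma pol_var: "j < 11 \<Longrightarrow> pol 1 (\<lambda>u. u j)"
proof -
  assume j: "j < 11"
  have "(\<lambda>u. u j) = mon (\<lambda>i. if i = j then 1 else 0)"
  proof
    fix u :: "nat \<Rightarrow> real"
    have "(\<Prod>i<11. u i ^ (if i = j then 1 else 0)) = (\<Prod>i<11. if i = j then u j else 1)"
      by (rule prod.cong) auto
    also have "\<dots> = u j" using j by (simp add: prod.delta)
    finally show "u j = mon (\<lambda>i. if i = j then 1 else 0) u" by (simp add: mon_def)
  qed
  moreover have "(\<lambda>i. if i = j then 1 else 0) \<in> Box 11 1" using j by (auto simp: Box_def)
  ultimately show ?thesis unfolding pol_def by (auto intro: fv.span_base)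
qed

lemma mon_mult: "mon \<beta> u * mon \<gamma> u = mon (\<lambda>j. \<beta> j + \<gamma> j) u"
  by (simp add: mon_def power_add prod.distrib)

lemma pol_mult_mon:
  assumes "pol b g" "\<beta> \<in> Box 11 a"
  shows "pol (a+b) (\<lambda>u. mon \<beta> u * g u)"
  using assms(1) unfolding pol_def
proof (induction rule: fv.span_induct_alt)
  case base then show ?case using fv.span_zero by (simp add: zero_fun_def)
next
  case (step c x y)
  then obtain \<gamma> where \<gamma>: "\<gamma> \<in> Box 11 b" "x = mon \<gamma>" by auto
  have "(\<lambda>u. mon \<beta> u * x u) \<in> mon ` Box 11 (a+b)"
    using \<gamma> assms(2) by (intro image_eqI[of _ _ "\<lambda>j. \<beta> j + \<gamma> j"]) (auto simp: mon_mult Box_def fun_eq_iff add_mono)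
  then have 1: "(\<lambda>u. mon \<beta> u * x u) \<in> fv.span (mon ` Box 11 (a+b))" by (rule fv.span_base)
  have 2: "pol (a+b) (\<lambda>u. c * (mon \<beta> u * x u) + mon \<beta> u * y u)"
    using pol_add[OF pol_scale[of "a+b" _ c] , of "\<lambda>u. mon \<beta> u * x u" "\<lambda>u. mon \<beta> u * y u"] 1 step(2)
    unfolding pol_def by simp
  have eq: "(\<lambda>u. mon \<beta> u * (scl c x + y) u) = (\<lambda>u. c * (mon \<beta> u * x u) + mon \<beta> u * y u)"
    by (simp add: fun_eq_iff scl_def algebra_simps)
  show ?case using 2 unfolding eq pol_def .
qed

lemma pol_mult:
  assumes "pol a f" "pol b g"
  shows "pol (a+b) (\<lambda>u. f u * g u)"
  using assms(1) unfolding pol_def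
proof (induction rule: fv.span_induct_alt)
  case base then show ?case using fv.span_zero by (simp add: zero_fun_def)
next
  case (step c x y)
  then obtain \<beta> where \<beta>: "\<beta> \<in> Box 11 a" "x = mon \<beta>" by auto
  have 1: "pol (a+b) (\<lambda>u. x u * g u)" using pol_mult_mon[OF assms(2) \<beta>(1)] \<beta>(2) by simp
  have 2: "pol (a+b) (\<lambda>u. c * (x u * g u) + y u * g u)"
    using pol_add[OF pol_scale[OF 1, of c], of "\<lambda>u. y u * g u"] step(2) unfolding pol_def by simp
  have eq: "(\<lambda>u. (scl c x + y) u * g u) = (\<lambda>u. c * (x u * g u) + y u * g u)"
    by (simp add: fun_eq_iff scl_def algebra_simps)
  show ?case using 2 unfolding eq pol_def .
qed

lemma pol_power: "pol a f \<Longrightarrow> pol (a*k) (\<lambda>u. f u ^ k)"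
proof (induction k)
  case 0 then show ?case using pol_const by simp
next
  case (Suc k)
  from pol_mult[OF Suc.prems Suc.IH[OF Suc.prems]] show ?case by (simp add: algebra_simps)
qed

lemma pol_prod: "finite A \<Longrightarrow> (\<And>i. i \<in> A \<Longrightarrow> pol (e i) (F i)) \<Longrightarrow> pol (\<Sum>i\<in>A. e i) (\<lambda>u. \<Prod>i\<in>A. F i u)"
proof (induction A rule: finite_induct)
  case empty then show ?case using pol_const by simp
next
  case (insert x A)
  then show ?case using pol_mult[of "e x" "F x" "sum e A"] by simp
qed



definition polyP :: "nat \<Rightarrow> ((nat \<Rightarrow> real) \<Rightarrow> real poly) \<Rightarrow> bool" where
  "polyP n P \<longleftrightarrow> (\<forall>j. pol n (\<lambda>u. coeff (P u) j))"

lemma polyP_mono_le: "polyP a P \<Longrightarrow> a \<le> b \<Longrightarrow> polyP b P"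
  unfolding polyP_def using pol_mono_le by blast

lemma polyP_add: "polyP n P \<Longrightarrow> polyP n Q \<Longrightarrow> polyP n (\<lambda>u. P u + Q u)"
  unfolding polyP_def using pol_add by simp

lemma polyP_diff: "polyP n P \<Longrightarrow> polyP n Q \<Longrightarrow> polyP n (\<lambda>u. P u - Q u)"
  unfolding polyP_def using pol_diff by simp

lemma polyP_smult: "polyP n P \<Longrightarrow> polyP n (\<lambda>u. smult c (P u))"
  unfolding polyP_def using pol_scale by simp

lemma polyP_const: "polyP n (\<lambda>u. [:c:])"
  unfolding polyP_def by (auto simp: coeff_pCons pol_const split: nat.split)

lemma polyP_mult: "polyP a P \<Longrightarrow> polyP b Q \<Longrightarrow> polyP (a+b) (\<lambda>u. P u * Q u)"
  unfolding polyP_def coeff_mult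
  by (auto intro!: pol_sum pol_mult)

lemma polyP_var_smult: "i < 11 \<Longrightarrow> polyP n P \<Longrightarrow> polyP (n+1) (\<lambda>u. smult (u i) (P u))"
  unfolding polyP_def using pol_mult[OF pol_var] by (simp add: add.commute)

lemma pol_var': "j < 11 \<Longrightarrow> pol (Suc 0) (\<lambda>u. u j)" using pol_var by simp

lemma coeff_lin: "coeff [:a, b:] n = (if n = 0 then a else if n = 1 then b else 0)"
  by (cases n) (auto simp: coeff_pCons split: nat.split)

lemma coeff_quad: "coeff [:a, b, c:] n = (if n = 0 then a else if n = 1 then b else if n = 2 then c else 0)"
  by (cases n) (auto simp: coeff_pCons numeral_2_eq_2 split: nat.split)

lemma polyP_lin: "i < 11 \<Longrightarrow> j < 11 \<Longrightarrow> polyP 1 (\<lambda>u. [:u i, u j:])"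
  unfolding polyP_def coeff_lin
proof (intro allI)
  fix n :: nat assume "i < 11" "j < 11"
  then show "pol 1 (\<lambda>u. if n = 0 then u i else if n = 1 then u j else 0)"
    by (cases "n = 0"; cases "n = 1") (auto simp: pol_var pol_var' pol_zero)
qed

lemma polyP_quad: "i < 11 \<Longrightarrow> j < 11 \<Longrightarrow> k < 11 \<Longrightarrow> polyP 1 (\<lambda>u. [:u i, u j, u k:])"
  unfolding polyP_def coeff_quad
proof (intro allI)
  fix n :: nat assume "i < 11" "j < 11" "k < 11"
  then show "pol 1 (\<lambda>u. if n = 0 then u i else if n = 1 then u j else if n = 2 then u k else 0)"
    by (cases "n = 0"; cases "n = 1"; cases "n = 2") (auto simp: pol_var pol_var' pol_zero)
qed

lemma polyP_pow2: "polyP a P \<Longrightarrow> polyP (a+a) (\<lambda>u. P u ^ 2)"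
  using polyP_mult[of a P a P] by (simp add: power2_eq_square)

definition fam :: "nat \<Rightarrow> (nat \<Rightarrow> real) \<Rightarrow> real poly \<times> real poly \<times> real poly" where
  "fam k u = (let t = u 0; K = [:u 1, u 2:]; L = [:u 3, u 4:]; S = [:u 5, u 6:]; lam = u 7;
     Q = [:u 8, u 9, u 10:]; \<sigma> = (if k = 0 then 1 else -1::real);
     A = (if k = 2 then Q else smult \<sigma> (K^2 + L^2));
     B = (if k = 2 then Q * (K^2 + L^2) else S^2 * A + smult 2 (S * K * Q) + smult \<sigma> (Q^2));
     C = (if k = 2 then Q * K else S * A + Q * K);
     X = smult (-t/2) (S^2) + smult lam Q
   in (A + smult t X, C, smult (1/4) (B + X^2)))"

lemma fam_polyP:
  assumes k: "k < 3"
  shows "polyP 6 (\<lambda>u. fst (fam k u)) \<and> polyP 6 (\<lambda>u. fst (snd (fam k u))) \<and> polyP 6 (\<lambda>u. snd (snd (fam k u)))"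
proof -
  define \<sigma> where "\<sigma> = (if k = 0 then 1 else -1::real)"
  have K: "polyP 1 (\<lambda>u. [:u 1, u 2:])" and L: "polyP 1 (\<lambda>u. [:u 3, u 4:])"
    and S: "polyP 1 (\<lambda>u. [:u 5, u 6:])" and Q: "polyP 1 (\<lambda>u. [:u 8, u 9, u 10:])"
    using polyP_lin[of 1 2] polyP_lin[of 3 4] polyP_lin[of 5 6] polyP_quad[of 8 9 10] by simp_all
  have KL: "polyP 2 (\<lambda>u. [:u 1, u 2:]^2 + [:u 3, u 4:]^2)"
    by (rule polyP_mono_le[OF polyP_add[OF polyP_pow2[OF K] polyP_pow2[OF L]]]) simp
  have S2: "polyP 2 (\<lambda>u. [:u 5, u 6:]^2)" by (rule polyP_mono_le[OF polyP_pow2[OF S]]) simp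
  have X: "polyP 3 (\<lambda>u. smult (- u 0 / 2) ([:u 5, u 6:]^2) + smult (u 7) [:u 8, u 9, u 10:])"
  proof -
    have 1: "polyP 3 (\<lambda>u. smult (u 0) (smult (-1/2) ([:u 5, u 6:]^2)))"
      by (rule polyP_mono_le[OF polyP_var_smult[OF _ polyP_smult[OF S2]]]) simp_all
    have 2: "polyP 3 (\<lambda>u. smult (u 7) [:u 8, u 9, u 10:])"
      by (rule polyP_mono_le[OF polyP_var_smult[OF _ Q]]) simp_all
    have eq: "(\<lambda>u::nat\<Rightarrow>real. smult (- u 0 / 2) ([:u 5, u 6:]^2) + smult (u 7) [:u 8, u 9, u 10:])
      = (\<lambda>u. smult (u 0) (smult (-1/2) ([:u 5, u 6:]^2)) + smult (u 7) [:u 8, u 9, u 10:])"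
      by (simp add: fun_eq_iff)
    show ?thesis unfolding eq by (rule polyP_add[OF 1 2])
  qed
  define A where "A = (if k = 2 then (\<lambda>u::nat\<Rightarrow>real. [:u 8, u 9, u 10:]) else (\<lambda>u. smult \<sigma> ([:u 1, u 2:]^2 + [:u 3, u 4:]^2)))"
  have A: "polyP 2 A"
  proof (cases "k = 2")
    case True show ?thesis unfolding A_def if_P[OF True] by (rule polyP_mono_le[OF Q]) simp
  next
    case False show ?thesis unfolding A_def if_not_P[OF False] by (rule polyP_smult[OF KL])
  qed
  define B where "B = (if k = 2 then (\<lambda>u::nat\<Rightarrow>real. [:u 8, u 9, u 10:] * ([:u 1, u 2:]^2 + [:u 3, u 4:]^2))
     else (\<lambda>u. [:u 5, u 6:]^2 * A u + smult 2 ([:u 5, u 6:] * [:u 1, u 2:] * [:u 8, u 9, u 10:]) + smult \<sigma> ([:u 8, u 9, u 10:]^2)))"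
  have B: "polyP 4 B"
  proof (cases "k = 2")
    case True
    show ?thesis unfolding B_def if_P[OF True] by (rule polyP_mono_le[OF polyP_mult[OF Q KL]]) simp
  next
    case False
    have 1: "polyP 4 (\<lambda>u. [:u 5, u 6:]^2 * A u)" by (rule polyP_mono_le[OF polyP_mult[OF S2 A]]) simp
    have 2: "polyP 4 (\<lambda>u. smult 2 ([:u 5, u 6:] * [:u 1, u 2:] * [:u 8, u 9, u 10:]))"
      by (rule polyP_mono_le[OF polyP_smult[OF polyP_mult[OF polyP_mult[OF S K] Q]]]) simp
    have 3: "polyP 4 (\<lambda>u. smult \<sigma> ([:u 8, u 9, u 10:]^2))"
      by (rule polyP_mono_le[OF polyP_smult[OF polyP_pow2[OF Q]]]) simp
    show ?thesis unfolding B_def if_not_P[OF False] by (rule polyP_add[OF polyP_add[OF 1 2] 3])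
  qed
  define C where "C = (if k = 2 then (\<lambda>u::nat\<Rightarrow>real. [:u 8, u 9, u 10:] * [:u 1, u 2:]) else (\<lambda>u. [:u 5, u 6:] * A u + [:u 8, u 9, u 10:] * [:u 1, u 2:]))"
  have C: "polyP 3 C"
  proof -
    have 1: "polyP 3 (\<lambda>u. [:u 8, u 9, u 10:] * [:u 1, u 2:])" by (rule polyP_mono_le[OF polyP_mult[OF Q K]]) simp
    have 2: "polyP 3 (\<lambda>u. [:u 5, u 6:] * A u)" by (rule polyP_mono_le[OF polyP_mult[OF S A]]) simp
    show ?thesis
    proof (cases "k = 2")
      case True show ?thesis unfolding C_def if_P[OF True] by (rule 1)
    next
      case False show ?thesis unfolding C_def if_not_P[OF False] by (rule polyP_add[OF 2 1])
    qed
  qed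
  have f: "fam k u = (A u + smult (u 0) (smult (- u 0 / 2) ([:u 5, u 6:]^2) + smult (u 7) [:u 8, u 9, u 10:]),
     C u, smult (1/4) (B u + (smult (- u 0 / 2) ([:u 5, u 6:]^2) + smult (u 7) [:u 8, u 9, u 10:])^2))" for u
    unfolding fam_def A_def B_def C_def \<sigma>_def Let_def by (cases "k = 2") simp_all
  have 1: "polyP 6 (\<lambda>u. fst (fam k u))"
    unfolding f fst_conv snd_conv by (rule polyP_mono_le[OF polyP_add[OF polyP_mono_le[OF A] polyP_var_smult[OF _ X]]]) simp_all
  have 2: "polyP 6 (\<lambda>u. fst (snd (fam k u)))"
    unfolding f fst_conv snd_conv by (rule polyP_mono_le[OF C]) simp
  have 3: "polyP 6 (\<lambda>u. snd (snd (fam k u)))"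
    unfolding f fst_conv snd_conv by (rule polyP_smult[OF polyP_add[OF polyP_mono_le[OF B] polyP_mono_le[OF polyP_pow2[OF X]]]]) simp_all
  show ?thesis using 1 2 3 by blast
qed



definition coordsF :: "nat \<Rightarrow> (nat \<Rightarrow> real) \<Rightarrow> nat \<Rightarrow> real" where
  "coordsF k u i = (if i < 3 then coeff (fst (fam k u)) (2 - i)
     else if i < 7 then coeff (fst (snd (fam k u))) (3 - (i - 3))
     else coeff (snd (snd (fam k u))) (4 - (i - 7)))"

lemma pol_coordsF: "k < 3 \<Longrightarrow> pol 6 (\<lambda>u. coordsF k u i)"
  using fam_polyP[of k] unfolding polyP_def coordsF_def
  by (cases "i < 3"; cases "i < 7") auto



lemma poly_deg1_eq: "degree (p::real poly) \<le> 1 \<Longrightarrow> p = [:coeff p 0, coeff p 1:]"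
  by (rule poly_eqI) (auto simp: coeff_lin coeff_eq_0)

lemma poly_deg2_eq: "degree (p::real poly) \<le> 2 \<Longrightarrow> p = [:coeff p 0, coeff p 1, coeff p 2:]"
  by (rule poly_eqI) (auto simp: coeff_quad coeff_eq_0)

lemma poly_deg0_eq: "degree (p::real poly) = 0 \<Longrightarrow> p = [:coeff p 0:]"
  by (rule poly_eqI) (auto simp: coeff_pCons coeff_eq_0 split: nat.split)

lemma dvd_deg:
  fixes Q P :: "real poly"
  assumes "Q dvd P" "degree Q = 2" "degree P \<le> n + 2"
  shows "\<exists>d. P = Q * d \<and> degree d \<le> n"
proof -
  from assms(1) obtain d where d: "P = Q * d" by (auto elim: dvdE)
  have Q0: "Q \<noteq> 0" using assms(2) by auto
  show ?thesis
  proof (cases "d = 0")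
    case True then show ?thesis using d by auto
  next
    case False
    then have "degree P = 2 + degree d" using d Q0 assms(2) by (simp add: degree_mult_eq)
    then show ?thesis using d assms(3) by auto
  qed
qed

lemma sumsq_zero: "(K::real poly)^2 + L^2 = 0 \<Longrightarrow> L = 0"
proof -
  assume h: "K^2 + L^2 = 0"
  have "poly L x = 0" for x
  proof -
    have "poly K x ^ 2 + poly L x ^ 2 = 0" using arg_cong[OF h, of "\<lambda>p. poly p x"] by simp
    then show ?thesis by (simp add: add_nonneg_eq_0_iff)
  qed
  then show "L = 0" using poly_all_0_iff_0 by blast
qed

lemma Q_prime:
  fixes a b c :: real
  assumes a: "a \<noteq> 0" and disc: "b^2 < 4*a*c"
  shows "prime_elem [:c, b, a:]"
proof -
  let ?Q = "[:c, b, a:]"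
  have noroot: "poly ?Q x \<noteq> 0" for x
  proof
    assume "poly ?Q x = 0"
    then have "c + x * (b + x * a) = 0" by simp
    moreover have "(2*a*x + b)^2 + (4*a*c - b^2) = 4*a*(c + x*(b + x*a))"
      by (simp add: power2_eq_square algebra_simps)
    ultimately have "(2*a*x + b)^2 + (4*a*c - b^2) = 0" by simp
    moreover have "(2*a*x + b)^2 \<ge> 0" by simp
    ultimately show False using disc by linarith
  qed
  have degQ: "degree ?Q = 2" using a by simp
  have "irreducible ?Q"
  proof (rule irreducibleI)
    show "?Q \<noteq> 0" using a by simp
    show "\<not> is_unit ?Q" using a by (simp add: is_unit_iff_degree)
    fix p1 p2 assume e: "?Q = p1 * p2"
    show "is_unit p1 \<or> is_unit p2"
    proof (rule ccontr)
      assume nu: "\<not> (is_unit p1 \<or> is_unit p2)"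
      have p0: "p1 \<noteq> 0" "p2 \<noteq> 0" using e a by auto
      have d1: "degree p1 \<noteq> 0" "degree p2 \<noteq> 0" using nu p0 by (auto simp: is_unit_iff_degree)
      have "degree p1 + degree p2 = 2" using e p0 degQ by (simp add: degree_mult_eq)
      then have "degree p1 = 1" using d1 by auto
      then have pe: "p1 = [:coeff p1 0, coeff p1 1:]" using poly_deg1_eq[of p1] by simp
      have lc: "coeff p1 1 \<noteq> 0" using \<open>degree p1 = 1\<close> p0(1) by (metis leading_coeff_0_iff)
      define x where "x = - coeff p1 0 / coeff p1 1"
      have "poly p1 x = coeff p1 0 + x * coeff p1 1" by (subst pe) simp
      also have "\<dots> = 0" using lc by (simp add: x_def)
      finally have "poly p1 x = 0" .
      then have "poly ?Q x = 0" by (simp only: e poly_mult)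
      with noroot show False by blast
    qed
  qed
  then show ?thesis by (rule field_poly_irreducible_imp_prime)
qed

lemma sqrt_step:
  fixes a b c t :: real and X :: "real poly"
  assumes a: "a \<noteq> 0" and disc: "b^2 < 4*a*c" and t: "t \<noteq> 0" and dX: "degree X \<le> 2"
  shows "\<exists>S lam. degree S \<le> 1 \<and> X = smult (-t/2) (S^2) + smult lam [:c, b, a:]"
proof -
  define r where "r = sqrt (4*a*c - b^2)"
  have r2: "r^2 = 4*a*c - b^2" unfolding r_def using disc by simp
  have rpos: "r > 0" unfolding r_def using disc by simp
  define z where "z = Complex (-b/(2*a)) (r/(2*a))"
  have Imz: "Im z \<noteq> 0" using a rpos by (simp add: z_def)
  have hz: "of_real c + of_real b * z + of_real a * z^2 = 0"
  proof (rule complex_eqI)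
    have "Re (of_real c + of_real b * z + of_real a * z^2) = (4*a*c - b^2 - r^2)/(4*a)"
      using a by (simp add: z_def power2_eq_square field_simps)
    then show "Re (of_real c + of_real b * z + of_real a * z^2) = Re 0"
      using r2 by simp
    show "Im (of_real c + of_real b * z + of_real a * z^2) = Im 0"
      using a by (simp add: z_def power2_eq_square field_simps)
  qed
  define x0 where "x0 = coeff X 0"
  define x1 where "x1 = coeff X 1"
  define x2 where "x2 = coeff X 2"
  have Xe: "X = [:x0, x1, x2:]" unfolding x0_def x1_def x2_def by (rule poly_deg2_eq[OF dX])
  define v where "v = - (2/t) * (of_real x0 + of_real x1 * z + of_real x2 * z^2)"
  define w where "w = csqrt v"
  have w2: "w^2 = v" unfolding w_def by simp
  define \<alpha> where "\<alpha> = Im w / Im z"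
  define \<beta> where "\<beta> = Re w - \<alpha> * Re z"
  have bw: "of_real \<beta> + of_real \<alpha> * z = w"
    by (rule complex_eqI) (use Imz in \<open>simp_all add: \<alpha>_def \<beta>_def\<close>)
  define p0 where "p0 = \<beta>^2 + (2/t)*x0"
  define p1 where "p1 = 2*\<alpha>*\<beta> + (2/t)*x1"
  define p2 where "p2 = \<alpha>^2 + (2/t)*x2"
  have ev0: "of_real p0 + of_real p1 * z + of_real p2 * z^2 = 0"
  proof -
    have "of_real p0 + of_real p1 * z + of_real p2 * z^2
        = (of_real \<beta> + of_real \<alpha> * z)^2 + (2/t) * (of_real x0 + of_real x1 * z + of_real x2 * z^2)"
      by (simp add: p0_def p1_def p2_def power2_eq_square algebra_simps)
    also have "\<dots> = 0" using t by (simp add: bw w2 v_def)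
    finally show ?thesis .
  qed
  define \<mu> where "\<mu> = p2 / a"
  define r0 where "r0 = p0 - \<mu> * c"
  define r1 where "r1 = p1 - \<mu> * b"
  have "of_real r0 + of_real r1 * z = (of_real p0 + of_real p1 * z + of_real p2 * z^2)
      - of_real \<mu> * (of_real c + of_real b * z + of_real a * z^2)"
    using a by (simp add: r0_def r1_def \<mu>_def algebra_simps)
  also have "\<dots> = 0" by (simp add: ev0 hz)
  finally have ev1: "of_real r0 + of_real r1 * z = 0" .
  have r1z: "r1 = 0" using arg_cong[OF ev1, of Im] Imz by simp
  have r0z: "r0 = 0" using arg_cong[OF ev1, of Re] r1z by simp
  define lam where "lam = t/2 * \<mu>"
  have "X = smult (-t/2) ([:\<beta>, \<alpha>:]^2) + smult lam [:c, b, a:]"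
    unfolding Xe using r0z r1z a t
    by (simp add: power2_eq_square lam_def r0_def r1_def \<mu>_def p0_def p1_def p2_def field_simps)
  moreover have "degree [:\<beta>, \<alpha>:] \<le> 1" by simp
  ultimately show ?thesis by blast
qed

lemma dm: "degree (p::real poly) \<le> m \<Longrightarrow> degree q \<le> n \<Longrightarrow> degree (p*q) \<le> m+n"
  by (rule order.trans[OF degree_mult_le]) simp

lemma dsm: "degree (p::real poly) \<le> m \<Longrightarrow> degree (smult c p) \<le> m"
  by (rule order.trans[OF degree_smult_le])

lemma dc: "degree ([:c:]::real poly) \<le> 0" "degree (2 :: real poly) \<le> 0" "degree (4 :: real poly) \<le> 0"
  by (simp_all add: degree_numeral)

definition uvec :: "real \<Rightarrow> real poly \<Rightarrow> real poly \<Rightarrow> real poly \<Rightarrow> real \<Rightarrow> real poly \<Rightarrow> nat \<Rightarrow> real" where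
  "uvec t K L S lm Q = (\<lambda>i. [t, coeff K 0, coeff K 1, coeff L 0, coeff L 1, coeff S 0, coeff S 1, lm,
      coeff Q 0, coeff Q 1, coeff Q 2] ! i)"

lemma fam_uvec:
  assumes "degree K \<le> 1" "degree L \<le> 1" "degree S \<le> 1" "degree Q \<le> 2"
  shows "fam k (uvec t K L S lm Q) = (let \<sigma> = (if k = 0 then 1 else -1::real);
     A = (if k = 2 then Q else smult \<sigma> (K^2 + L^2));
     B = (if k = 2 then Q * (K^2 + L^2) else S^2 * A + smult 2 (S * K * Q) + smult \<sigma> (Q^2));
     C = (if k = 2 then Q * K else S * A + Q * K);
     X = smult (-t/2) (S^2) + smult lm Q
   in (A + smult t X, C, smult (1/4) (B + X^2)))"
proof -
  have e: "[:coeff K 0, coeff K 1:] = K" "[:coeff L 0, coeff L 1:] = L" "[:coeff S 0, coeff S 1:] = S"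
    "[:coeff Q 0, coeff Q 1, coeff Q 2:] = Q"
    using poly_deg1_eq[OF assms(1)] poly_deg1_eq[OF assms(2)] poly_deg1_eq[OF assms(3)] poly_deg2_eq[OF assms(4)]
    by simp_all
  have e': "[:coeff K 0, coeff K (Suc 0):] = K" "[:coeff L 0, coeff L (Suc 0):] = L" "[:coeff S 0, coeff S (Suc 0):] = S"
    "[:coeff Q 0, coeff Q (Suc 0), coeff Q 2:] = Q" using e by simp_all
  show ?thesis unfolding fam_def uvec_def Let_def by (simp add: e e' del: pCons_0_0)
qed

lemma core:
  fixes a2 a3 a4 X E :: "real poly" and a b c t :: real
  assumes a: "a \<noteq> 0" and disc: "b^2 < 4*a*c" and t: "t \<noteq> 0"
    and d2: "degree a2 \<le> 2" and d3: "degree a3 \<le> 3" and d4: "degree a4 \<le> 4"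
    and dX: "degree X \<le> 2" and dE: "degree E \<le> 3" and E0: "E \<noteq> 0"
    and eqE: "E^2 = (a2 - [:t:]*X) * (4*a4 - X^2) - a3^2"
    and dG: "[:c,b,a:] dvd (a2 - [:t:]*X) * (4*a4 - X^2) - a3^2"
    and dH: "[:c,b,a:] dvd 3*[:t:]*X^2 - 2*a2*X - 4*[:t:]*a4"
  shows "\<exists>k<3. \<exists>u. fam k u = (a2, a3, a4)"
proof -
  define Q where "Q = [:c,b,a:]"
  define A where "A = a2 - [:t:]*X"
  define B where "B = 4*a4 - X^2"
  define Hn where "Hn = [:t:]*B + 2*X*A"
  have pQ: "prime_elem Q" unfolding Q_def by (rule Q_prime[OF a disc])
  have degQ: "degree Q = 2" using a by (simp add: Q_def)
  have Q0: "Q \<noteq> 0" using a by (simp add: Q_def)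
  have dA: "degree A \<le> 2" unfolding A_def
    by (rule degree_diff_le[OF d2]) (rule order.trans[OF degree_mult_le], simp add: dX)
  have "Q dvd E^2" using dG eqE by (simp add: Q_def)
  then have "Q dvd E" by (rule prime_elem_dvd_power[OF pQ])
  then obtain L where EL: "E = Q * L" and dL: "degree L \<le> 1"
    using dvd_deg[of Q E 1] degQ dE by auto
  have L0: "L \<noteq> 0" using EL E0 by auto
  have "Hn = - (3*[:t:]*X^2 - 2*a2*X - 4*[:t:]*a4)"
    unfolding Hn_def A_def B_def by algebra
  then have "Q dvd Hn" using dH by (simp only: Q_def dvd_minus_iff)
  moreover have "degree Hn \<le> 2 + 2"
  proof -
    have "degree B \<le> 4" unfolding B_def
      by (rule degree_diff_le) (use dm[OF dc(3) d4] dm[OF dX dX] in \<open>simp_all add: power2_eq_square\<close>)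
    then show ?thesis unfolding Hn_def
      using dm[OF dc(1) \<open>degree B \<le> 4\<close>, of t] dm[OF dm[OF dc(2) dX] dA]
      by (intro degree_add_le) simp_all
  qed
  ultimately obtain R where HR: "Hn = Q * R" and dR: "degree R \<le> 2"
    using dvd_deg[of Q Hn 2] degQ by auto
  obtain S0 lam where dS0: "degree S0 \<le> 1" and XS0: "X = smult (-t/2) (S0^2) + smult lam Q"
    using sqrt_step[OF a disc t dX] unfolding Q_def by blast
  have GQ: "Q dvd A*B - a3^2" using dG by (simp add: Q_def A_def B_def)
  have h50: "2*X = - [:t:]*S0^2 + 2*[:lam:]*Q"
    using XS0 by (simp add: numeral_poly smult_add_right smult_diff_right mult.commute)
  have h40: "Hn = [:t:]*B + 2*X*A" by (simp add: Hn_def)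
  have eq0: "[:t:] * ((a3 - S0*A) * (a3 + S0*A)) = A*Hn - [:t:]*(A*B - a3^2) - 2*[:lam:]*A^2*Q"
    using h50 h40 by algebra
  have i1: "Q dvd A*Hn" using \<open>Q dvd Hn\<close> by (rule dvd_mult)
  have i2: "Q dvd [:t:]*(A*B - a3^2)" using GQ by (rule dvd_mult)
  have i3: "Q dvd 2*[:lam:]*A^2*Q" by (rule dvd_triv_right)
  have "Q dvd A*Hn - [:t:]*(A*B - a3^2) - 2*[:lam:]*A^2*Q"
    by (intro dvd_diff i1 i2 i3)
  then have "Q dvd [:1/t:] * ([:t:] * ((a3 - S0*A) * (a3 + S0*A)))"
    unfolding eq0 by (rule dvd_mult)
  then have "Q dvd (a3 - S0*A) * (a3 + S0*A)" using t by simp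
  then obtain S where dS: "degree S \<le> 1" and XS: "X = smult (-t/2) (S^2) + smult lam Q"
      and dS3: "Q dvd a3 - S*A"
  proof (cases "Q dvd a3 - S0*A")
    case True then show ?thesis using that dS0 XS0 by blast
  next
    case False
    with \<open>Q dvd (a3 - S0*A) * (a3 + S0*A)\<close> pQ have "Q dvd a3 + S0*A"
      using prime_elem_dvd_mult_iff by blast
    then show ?thesis using that[of "-S0"] dS0 XS0 by simp
  qed
  have "degree (a3 - S*A) \<le> 1 + 2"
    using dm[OF dS dA] d3 by (intro degree_diff_le) simp_all
  then obtain K where K: "a3 - S*A = Q * K" and dK: "degree K \<le> 1"
    using dvd_deg[of Q "a3 - S*A" 1] dS3 degQ by auto
  have a3e: "a3 = S*A + Q*K" using K by (simp add: algebra_simps)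
  define W where "W = R - smult (2*lam) A - smult (2*t) (S*K)"
  have h5: "2*X = - [:t:]*S^2 + 2*[:lam:]*Q"
    using XS by (simp add: numeral_poly smult_add_right smult_diff_right mult.commute)
  have h7: "W = R - 2*[:lam:]*A - 2*[:t:]*(S*K)" unfolding W_def by (simp add: numeral_poly mult.commute)
  have h2: "E^2 = A*B - a3^2" using eqE by (simp add: A_def B_def)
  have h4: "Hn = [:t:]*B + 2*X*A" by (simp add: Hn_def)
  have "Q * (A * W) = Q * ([:t:] * (Q * (K^2 + L^2)))"
    using EL h2 HR h4 h5 a3e h7 by algebra
  then have "A * W = [:t:] * (Q * (K^2 + L^2))" by (simp only: mult_left_cancel[OF Q0])
  then have main: "A * W = smult t (Q * (K^2 + L^2))" by simp
  have dSK: "degree (S*K) \<le> 2" using dm[OF dS dK] by simp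
  have dW: "degree W \<le> 2" unfolding W_def
    by (intro degree_diff_le dR dsm[OF dA] dsm[OF dSK])
  have "Q dvd A * W" unfolding main by (simp add: dvd_smult)
  then have QAW: "Q dvd A \<or> Q dvd W" using pQ prime_elem_dvd_mult_iff by blast
  have dQ2: "degree Q \<le> 2" using degQ by simp
  have tB0: "[:t:]*B = Q*R - 2*X*A" using HR h4 by (simp add: algebra_simps)
  show ?thesis
  proof (cases "Q dvd W")
    case True
    obtain d where Wd: "W = Q * d" and dd: "degree d \<le> 0"
      using dvd_deg[of Q W 0] True degQ dW by auto
    define \<nu> where "\<nu> = coeff d 0"
    have Wn: "W = [:\<nu>:] * Q" using Wd poly_deg0_eq[of d] dd by (simp add: \<nu>_def mult.commute)
    have "Q * ([:\<nu>:] * A) = Q * ([:t:] * (K^2 + L^2))"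
      using main Wn by (simp add: algebra_simps smult_add_right)
    then have nA: "[:\<nu>:] * A = [:t:] * (K^2 + L^2)" by (simp only: mult_left_cancel[OF Q0])
    have nu0: "\<nu> \<noteq> 0"
    proof
      assume "\<nu> = 0"
      then have "K^2 + L^2 = 0" using nA t by simp
      then show False using sumsq_zero L0 by blast
    qed
    define \<tau> where "\<tau> = t / \<nu>"
    have tau0: "\<tau> \<noteq> 0" using t nu0 by (simp add: \<tau>_def)
    have Ae: "A = smult \<tau> (K^2 + L^2)"
    proof -
      have "[:1/\<nu>:] * ([:\<nu>:] * A) = [:1/\<nu>:] * ([:t:] * (K^2 + L^2))" using nA by simp
      then show ?thesis using nu0 by (simp add: \<tau>_def)
    qed
    have "[:t:]*B = [:\<nu>:]*Q^2 + 2*[:t:]*S*K*Q + [:t:]*S^2*A"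
      using tB0 Wn h7 h5 by algebra
    then have "[:1/t:]*([:t:]*B) = [:1/t:]*([:\<nu>:]*Q^2 + 2*[:t:]*S*K*Q + [:t:]*S^2*A)" by simp
    then have Be: "B = S^2 * A + smult 2 (S*K*Q) + smult (1/\<tau>) (Q^2)"
      using t by (simp add: \<tau>_def numeral_poly smult_add_right algebra_simps)
    define \<sigma> where "\<sigma> = (if \<tau> > 0 then 1 else -1::real)"
    define \<rho> where "\<rho> = sqrt \<bar>\<tau>\<bar>"
    have rho0: "\<rho> > 0" using tau0 by (simp add: \<rho>_def)
    have tau_eq: "\<tau> = \<sigma> * \<rho>^2" using tau0 by (simp add: \<sigma>_def \<rho>_def)
    define k where "k = (if \<tau> > 0 then 0 else 1::nat)"
    have sk: "(if k = 0 then 1 else -1::real) = \<sigma>" by (simp add: k_def \<sigma>_def)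
    define K' where "K' = smult \<rho> K"
    define L' where "L' = smult \<rho> L"
    define Q' where "Q' = smult (1/\<rho>) Q"
    define lm where "lm = \<rho> * lam"
    have dK': "degree K' \<le> 1" using dK by (simp add: K'_def)
    have dL': "degree L' \<le> 1" using dL by (simp add: L'_def)
    have dQ': "degree Q' \<le> 2" using dQ2 rho0 by (simp add: Q'_def)
    have eA: "smult \<sigma> (K'^2 + L'^2) = A"
      unfolding Ae K'_def L'_def tau_eq by (simp add: smult_add_right smult_power mult.commute)
    have eX: "smult (-t/2) (S^2) + smult lm Q' = X"
      unfolding XS lm_def Q'_def using rho0 by simp
    have eB: "S^2 * A + smult 2 (S * K' * Q') + smult \<sigma> (Q'^2) = B"
    proof -
      have s2: "\<sigma> * \<sigma> = 1" by (simp add: \<sigma>_def)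
      have "\<sigma> / \<rho>^2 = 1 / \<tau>" using rho0 unfolding tau_eq by (simp add: \<sigma>_def)
      then show ?thesis unfolding Be K'_def Q'_def using rho0 by (simp add: power2_eq_square)
    qed
    have k3: "k < 3" by (simp add: k_def)
    have k2: "k \<noteq> 2" by (simp add: k_def)
    have "fam k (uvec t K' L' S lm Q') = (a2, a3, a4)"
    proof -
      have "fam k (uvec t K' L' S lm Q') = (A + smult t X, S * A + Q' * K', smult (1/4) (B + X^2))"
        unfolding fam_uvec[OF dK' dL' dS dQ'] Let_def sk using k2 eA eX eB by simp
      also have "\<dots> = (a2, a3, a4)"
      proof -
        have "Q' * K' = Q * K" unfolding Q'_def K'_def using rho0 by simp
        moreover have "A + smult t X = a2" by (simp add: A_def)
        moreover have "smult (1/4) (B + X^2) = a4" by (simp add: B_def numeral_poly)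
        ultimately show ?thesis using a3e by simp
      qed
      finally show ?thesis .
    qed
    then show ?thesis using k3 by blast
  next
    case False
    then have QA: "Q dvd A" using QAW by blast
    obtain d where Ad: "A = Q * d" and dd: "degree d \<le> 0"
      using dvd_deg[of Q A 0] QA degQ dA by auto
    define \<alpha> where "\<alpha> = coeff d 0"
    have Aa: "A = [:\<alpha>:] * Q" using Ad poly_deg0_eq[of d] dd by (simp add: \<alpha>_def mult.commute)
    have "Q * ([:\<alpha>:] * W) = Q * ([:t:] * (K^2 + L^2))"
      using main Aa by (simp add: algebra_simps smult_add_right)
    then have aW: "[:\<alpha>:] * W = [:t:] * (K^2 + L^2)" by (simp only: mult_left_cancel[OF Q0])
    have al0: "\<alpha> \<noteq> 0"
    proof
      assume "\<alpha> = 0"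
      then have "K^2 + L^2 = 0" using aW t by simp
      then show False using sumsq_zero L0 by blast
    qed
    have "[:t:]*([:\<alpha>:]*B) = [:t:]*(Q*((K + [:\<alpha>:]*S)^2 + L^2))"
      using tB0 h7 h5 aW Aa by algebra
    moreover have t0: "[:t:] \<noteq> 0" using t by simp
    ultimately have aB: "[:\<alpha>:]*B = Q*((K + [:\<alpha>:]*S)^2 + L^2)" using mult_left_cancel[OF t0] by blast
    define Q' where "Q' = smult \<alpha> Q"
    define M' where "M' = smult (1/\<alpha>) (K + smult \<alpha> S)"
    define L' where "L' = smult (1/\<alpha>) L"
    define lm where "lm = lam / \<alpha>"
    have dM': "degree M' \<le> 1" unfolding M'_def using dK dS
      by (intro dsm degree_add_le dsm) simp_all
    have dL': "degree L' \<le> 1" using dL by (simp add: L'_def)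
    have dQ': "degree Q' \<le> 2" using dQ2 by (simp add: Q'_def)
    have eA: "Q' = A" using Aa by (simp add: Q'_def)
    have eX: "smult (-t/2) (S^2) + smult lm Q' = X"
      unfolding XS lm_def Q'_def using al0 by simp
    have eB: "Q' * (M'^2 + L'^2) = B"
    proof -
      have "B = [:1/\<alpha>:] * ([:\<alpha>:]*B)" using al0 by simp
      also have "\<dots> = smult (1/\<alpha>) (Q*((K + smult \<alpha> S)^2 + L^2))" unfolding aB by simp
      also have "\<dots> = Q' * (M'^2 + L'^2)" unfolding Q'_def M'_def L'_def using al0
        by (simp add: power2_eq_square smult_add_right algebra_simps)
      finally show ?thesis by simp
    qed
    have eC: "Q' * M' = a3" unfolding a3e Aa Q'_def M'_def using al0 by (simp add: algebra_simps smult_add_right)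
    have "fam 2 (uvec t M' L' S lm Q') = (a2, a3, a4)"
    proof -
      have "fam 2 (uvec t M' L' S lm Q') = (Q' + smult t X, Q' * M', smult (1/4) (Q' * (M'^2 + L'^2) + X^2))"
        unfolding fam_uvec[OF dM' dL' dS dQ'] Let_def using eX by simp
      also have "\<dots> = (a2, a3, a4)"
      proof -
        have "A + smult t X = a2" by (simp add: A_def)
        moreover have "smult (1/4) (B + X^2) = a4" by (simp add: B_def numeral_poly)
        ultimately show ?thesis using eA eB eC by simp
      qed
      finally show ?thesis .
    qed
    then show ?thesis by (intro exI[of _ 2]) auto
  qed
qed

lemma coeff_D: "coeff (poly (f::bpoly) 1) i = (\<Sum>j\<le>degree f. poly.coeff (coeff f j) i)"
  by (simp add: poly_altdef coeff_sum)

lemma form_D_coeff: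
  assumes f: "form_of_degree d f" and j: "j \<le> d"
  shows "coeff (poly f 1) (d - j) = form_coeff d f j"
proof -
  have z: "poly.coeff (coeff f j') i = 0" if "i + j' \<noteq> d" for i j'
    using f that unfolding form_of_degree_def by blast
  have "coeff (poly f 1) (d - j) = (\<Sum>j'\<le>degree f. if j' = j then poly.coeff (coeff f j) (d - j) else 0)"
    unfolding coeff_D by (rule sum.cong) (use z j in auto)
  also have "\<dots> = poly.coeff (coeff f j) (d - j)"
    by (auto simp: coeff_eq_0)
  finally show ?thesis by (simp add: form_coeff_def)
qed

lemma form_D_degree:
  assumes f: "form_of_degree d f"
  shows "degree (poly f 1) \<le> d"
proof (rule degree_le, intro allI impI)
  fix i assume "d < i"
  then have "poly.coeff (coeff f j) i = 0" for j using f unfolding form_of_degree_def by force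
  then show "coeff (poly f 1) i = 0" unfolding coeff_D by simp
qed

lemma form_D_nonzero:
  assumes f: "form_of_degree d f"
  shows "poly f 1 \<noteq> 0"
proof -
  have f0: "f \<noteq> 0" using f by (simp add: form_of_degree_def)
  define j where "j = degree f"
  have cj: "coeff f j \<noteq> 0" using f0 by (simp add: j_def)
  define i where "i = degree (coeff f j)"
  have ci: "poly.coeff (coeff f j) i \<noteq> 0" using cj by (simp add: i_def)
  then have ij: "i + j = d" using f unfolding form_of_degree_def by blast
  have "coeff (poly f 1) (d - j) = form_coeff d f j" using ij by (intro form_D_coeff[OF f]) simp
  also have "\<dots> = poly.coeff (coeff f j) i"
  proof -
    have "d - j = i" using ij by simp
    then show ?thesis by (simp add: form_coeff_def)
  qed
  finally show ?thesis using ci by auto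
qed

lemma unit_bpoly: "is_unit (p::bpoly) \<Longrightarrow> \<exists>c. p = [:c:] \<and> degree c = 0"
proof -
  assume "is_unit p"
  then obtain c where c: "p = [:c:]" "is_unit c" using is_unit_poly_iff by blast
  then have "c \<noteq> 0" by auto
  then have "degree c = 0" using c(2) is_unit_iff_degree by blast
  then show ?thesis using c by blast
qed

lemma form2_eq:
  assumes q: "form_of_degree 2 q"
  shows "q = [:[:0, 0, poly.coeff (coeff q 0) 2:], [:0, poly.coeff (coeff q 1) 1:], [:poly.coeff (coeff q 2) 0:]:]"
    (is "q = ?R")
proof (rule poly_eqI, rule poly_eqI)
  fix n i
  have z: "poly.coeff (coeff q n) i = 0" if "i + n \<noteq> 2" using q that unfolding form_of_degree_def by blast
  show "poly.coeff (coeff q n) i = poly.coeff (coeff ?R n) i"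
  proof (cases "i + n = 2")
    case True
    then have "(n = 0 \<and> i = 2) \<or> (n = 1 \<and> i = 1) \<or> (n = 2 \<and> i = 0)" by auto
    then show ?thesis by (auto simp: coeff_quad coeff_lin)
  next
    case False
    then show ?thesis using z[OF False] by (auto simp: coeff_quad coeff_lin coeff_pCons split: nat.split)
  qed
qed

lemma irred_form2:
  assumes q: "form_of_degree 2 q" and irr: "irreducible q"
  defines "a \<equiv> poly.coeff (coeff q 0) 2" and "b \<equiv> poly.coeff (coeff q 1) 1" and "c \<equiv> poly.coeff (coeff q 2) 0"
  shows "a \<noteq> 0 \<and> b^2 < 4*a*c \<and> poly q 1 = [:c, b, a:]"
proof -
  have qe: "q = [:[:0, 0, a:], [:0, b:], [:c:]:]" unfolding a_def b_def c_def by (rule form2_eq[OF q])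
  have q0: "q \<noteq> 0" using q by (simp add: form_of_degree_def)
  have Dq: "poly q 1 = [:c, b, a:]"
    by (subst qe) (simp add: numeral_poly)
  have nu: "\<not> is_unit p" if "degree (coeff p 0) \<noteq> 0" for p :: bpoly
    using unit_bpoly[of p] that by auto
  have a0: "a \<noteq> 0"
  proof
    assume a: "a = 0"
    have e: "q = [:0, 1:] * [:[:0, b:], [:c:]:]" using qe a by simp
    have "\<not> is_unit ([:0, 1:] :: bpoly)" using unit_bpoly[of "[:0,1:]"] by auto
    moreover have "\<not> is_unit ([:[:0, b:], [:c:]:] :: bpoly)"
    proof
      assume "is_unit ([:[:0, b:], [:c:]:] :: bpoly)"
      then obtain c' where "[:[:0, b:], [:c:]:] = [:c':]" "degree c' = 0" using unit_bpoly by blast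
      then have "b = 0" "c = 0" by (auto split: if_splits)
      then show False using q0 qe a by simp
    qed
    ultimately show False using irreducibleD[OF irr e] by blast
  qed
  have disc: "b^2 < 4*a*c"
  proof (rule ccontr)
    assume "\<not> b^2 < 4*a*c"
    then have dpos: "b^2 - 4*a*c \<ge> 0" by simp
    define s where "s = sqrt (b^2 - 4*a*c)"
    have s2: "s^2 = b^2 - 4*a*c" unfolding s_def using dpos by simp
    define r1 where "r1 = (-b + s) / (2*a)"
    define r2 where "r2 = (-b - s) / (2*a)"
    have sum: "- a*r1 - a*r2 = b" using a0 by (simp add: r1_def r2_def field_simps)
    have prod: "a*r1*r2 = c"
    proof -
      have "a*r1*r2 = (b^2 - s^2) / (4*a)" using a0 by (simp add: r1_def r2_def field_simps power2_eq_square)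
      then show ?thesis using s2 a0 by (simp add: field_simps)
    qed
    define p1 :: bpoly where "p1 = [:[:0, a:], [:-a*r1:]:]"
    define p2 :: bpoly where "p2 = [:[:0, 1:], [:-r2:]:]"
    have e: "q = p1 * p2"
    proof -
      have "p1 * p2 = [:[:0, 0, a:], [:0, - a*r1 - a*r2:], [:a*r1*r2:]:]"
        by (simp add: p1_def p2_def algebra_simps)
      then show ?thesis using qe sum prod by simp
    qed
    have "\<not> is_unit p1" using a0 by (intro nu) (simp add: p1_def)
    moreover have "\<not> is_unit p2" by (intro nu) (simp add: p2_def)
    ultimately show False using irreducibleD[OF irr e] by blast
  qed
  show ?thesis using a0 disc Dq by blast
qed

lemma D_dvd: "(q::bpoly) dvd g \<Longrightarrow> poly q 1 dvd poly g 1"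
  by (auto elim!: dvdE simp: poly_mult)

lemma key_param2: "in_T f2 f3 f4 \<Longrightarrow> \<exists>k<3. \<exists>u. \<forall>i<12. triple_coords f2 f3 f4 i = coordsF k u i"
proof -
  assume T: "in_T f2 f3 f4"
  then have F2: "form_of_degree 2 f2" and F3: "form_of_degree 3 f3" and F4: "form_of_degree 4 f4"
    by (simp_all add: in_T_def)
  from T obtain t \<xi> \<eta> q where t: "t \<noteq> 0" and Fx: "form_of_degree 2 \<xi>" and Fe: "form_of_degree 3 \<eta>"
    and eta: "\<eta>^2 = g_t f2 f3 f4 t \<xi>" and Fq: "form_of_degree 2 q" and irr: "irreducible q"
    and qg: "q dvd g_t f2 f3 f4 t \<xi>" and qh: "q dvd h_t f2 f4 t \<xi>"
    unfolding in_T_def by blast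
  define a where "a = poly.coeff (coeff q 0) 2"
  define b where "b = poly.coeff (coeff q 1) 1"
  define c where "c = poly.coeff (coeff q 2) 0"
  have abc: "a \<noteq> 0" "b^2 < 4*a*c" "poly q 1 = [:c, b, a:]"
    using irred_form2[OF Fq irr] unfolding a_def b_def c_def by blast+
  have gD: "poly (g_t f2 f3 f4 t \<xi>) 1 = (poly f2 1 - [:t:]*poly \<xi> 1) * (4*poly f4 1 - (poly \<xi> 1)^2) - (poly f3 1)^2"
    by (simp add: g_t_def bconst_def)
  have hD: "poly (h_t f2 f4 t \<xi>) 1 = 3*[:t:]*(poly \<xi> 1)^2 - 2*poly f2 1*poly \<xi> 1 - 4*[:t:]*poly f4 1"
    by (simp add: h_t_def bconst_def)
  have "\<exists>k<3. \<exists>u. fam k u = (poly f2 1, poly f3 1, poly f4 1)"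
  proof (rule core[OF abc(1,2) t])
    show "degree (poly f2 1) \<le> 2" by (rule form_D_degree[OF F2])
    show "degree (poly f3 1) \<le> 3" by (rule form_D_degree[OF F3])
    show "degree (poly f4 1) \<le> 4" by (rule form_D_degree[OF F4])
    show "degree (poly \<xi> 1) \<le> 2" by (rule form_D_degree[OF Fx])
    show "degree (poly \<eta> 1) \<le> 3" by (rule form_D_degree[OF Fe])
    show "poly \<eta> 1 \<noteq> 0" by (rule form_D_nonzero[OF Fe])
    show "(poly \<eta> 1)^2 = (poly f2 1 - [:t:]*poly \<xi> 1) * (4*poly f4 1 - (poly \<xi> 1)^2) - (poly f3 1)^2"
      using arg_cong[OF eta, of "\<lambda>p. poly p 1"] gD by simp
    show "[:c, b, a:] dvd (poly f2 1 - [:t:]*poly \<xi> 1) * (4*poly f4 1 - (poly \<xi> 1)^2) - (poly f3 1)^2"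
      using D_dvd[OF qg] gD abc(3) by simp
    show "[:c, b, a:] dvd 3*[:t:]*(poly \<xi> 1)^2 - 2*poly f2 1*poly \<xi> 1 - 4*[:t:]*poly f4 1"
      using D_dvd[OF qh] hD abc(3) by simp
  qed
  then obtain k u where k: "k < 3" and fk: "fam k u = (poly f2 1, poly f3 1, poly f4 1)" by blast
  have "triple_coords f2 f3 f4 i = coordsF k u i" if i: "i < 12" for i
  proof -
    consider "i < 3" | "\<not> i < 3" "i < 7" | "\<not> i < 7" by linarith
    then show ?thesis
    proof cases
      case 1 then show ?thesis unfolding triple_coords_def coordsF_def fk
        using form_D_coeff[OF F2, of i] by simp
    next
      case 2 then show ?thesis unfolding triple_coords_def coordsF_def fk
        using form_D_coeff[OF F3, of "i - 3"] by simp
    next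
      case 3 then show ?thesis unfolding triple_coords_def coordsF_def fk
        using form_D_coeff[OF F4, of "i - 7"] i by simp
    qed
  qed
  then show ?thesis using k by blast
qed

definition liftS :: "nat \<Rightarrow> ((nat \<Rightarrow> real) \<Rightarrow> real) \<Rightarrow> (nat \<times> (nat \<Rightarrow> real) \<Rightarrow> real)" where
  "liftS k0 h = (\<lambda>(k, u). if k = k0 then h u else 0)"

lemma liftS_span:
  assumes "pol N h" "k0 < 3"
  shows "liftS k0 h \<in> fv.span ((\<lambda>(k0, \<beta>). liftS k0 (mon \<beta>)) ` ({..<3} \<times> Box 11 N))"
  using assms(1) unfolding pol_def
proof (induction rule: fv.span_induct_alt)
  case base
  have eq: "liftS k0 0 = 0" by (simp add: liftS_def fun_eq_iff)
  show ?case unfolding eq by (rule fv.span_zero)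
next
  case (step c x y)
  then obtain \<beta> where \<beta>: "\<beta> \<in> Box 11 N" "x = mon \<beta>" by auto
  have 1: "liftS k0 x \<in> fv.span ((\<lambda>(k0, \<beta>). liftS k0 (mon \<beta>)) ` ({..<3} \<times> Box 11 N))"
    using \<beta> assms(2) by (intro fv.span_base) (auto intro!: image_eqI[of _ _ "(k0, \<beta>)"])
  have eq: "liftS k0 (scl c x + y) = scl c (liftS k0 x) + liftS k0 y"
    by (simp add: liftS_def fun_eq_iff scl_def)
  show ?case unfolding eq by (intro fv.span_add fv.span_scale 1 step(2))
qed

lemma count_ineq: "3 * (72 * m + 1) ^ 11 < ((m::nat) + 1) ^ 12" if m: "m = 3 * 72 ^ 11"
proof -
  have "(72 * m + 1) ^ 11 \<le> (72 * (m + 1)) ^ 11" by (intro power_mono) auto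
  then have "3 * (72 * m + 1) ^ 11 \<le> 3 * (72 * (m + 1)) ^ 11" by simp
  also have "\<dots> = 3 * 72 ^ 11 * (m + 1) ^ 11" by (simp only: power_mult_distrib mult.assoc)
  also have "\<dots> = m * (m + 1) ^ 11" using m by simp
  also have "\<dots> < (m + 1) * (m + 1) ^ 11" by simp
  also have "\<dots> = (m + 1) ^ 12" by (simp add: power_Suc[symmetric] del: power_Suc)
  finally show ?thesis .
qed

theorem proposition8p1:
  shows "\<exists>c. poly12 c \<and> (\<exists>\<alpha>. c \<alpha> \<noteq> 0) \<and>
           (\<forall>f2 f3 f4. in_T f2 f3 f4 \<longrightarrow> eval12 c (triple_coords f2 f3 f4) = 0)"
proof -
  define m :: nat where "m = 3 * 72 ^ 11"
  define N where "N = 72 * m"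
  define I where "I = Box 12 m"
  define S where "S = (\<lambda>(k0, \<beta>). liftS k0 (mon \<beta>)) ` ({..<3} \<times> Box 11 N)"
  define g where "g = (\<lambda>\<alpha>. \<Sum>k0<3. liftS k0 (\<lambda>u. \<Prod>i<12. coordsF k0 u i ^ \<alpha> i))"
  have finI: "finite I" unfolding I_def by (rule finite_Box)
  have finS: "finite S" unfolding S_def by (intro finite_imageI finite_cartesian_product finite_Box) auto
  have "card S \<le> card ({..<3::nat} \<times> Box 11 N)" unfolding S_def by (rule card_image_le) (intro finite_cartesian_product finite_Box, auto)
  also have "\<dots> = 3 * (N + 1) ^ 11" by (simp add: card_cartesian_product card_Box)
  also have "\<dots> < (m + 1) ^ 12" unfolding N_def by (rule count_ineq) (simp add: m_def)
  also have "\<dots> = card I" by (simp add: I_def card_Box)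
  finally have cs: "card S < card I" .
  have sp: "g \<alpha> \<in> fv.span S" if \<alpha>: "\<alpha> \<in> I" for \<alpha>
  proof -
    have "pol N (\<lambda>u. \<Prod>i<12. coordsF k0 u i ^ \<alpha> i)" if k0: "k0 < 3" for k0
    proof -
      have P: "pol (\<Sum>i<12. 6 * \<alpha> i) (\<lambda>u. \<Prod>i<12. coordsF k0 u i ^ \<alpha> i)"
        by (rule pol_prod) (simp, rule pol_power[OF pol_coordsF[OF k0]])
      have le: "(\<Sum>i<12. 6 * \<alpha> i) \<le> (\<Sum>i<(12::nat). 6 * m)"
        using \<alpha> by (intro sum_mono) (auto simp: I_def Box_def)
      show ?thesis by (rule pol_mono_le[OF P]) (use le in \<open>simp add: N_def\<close>)
    qed
    then show ?thesis unfolding g_def S_def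
      by (intro fv.span_sum liftS_span) auto
  qed
  obtain c where c: "\<exists>i\<in>I. c i \<noteq> 0" "\<And>x. (\<Sum>i\<in>I. c i * g i x) = 0"
    using exists_dep[of I S g] finI finS cs sp by blast
  define c0 where "c0 = (\<lambda>\<alpha>. if \<alpha> \<in> I then c \<alpha> else 0)"
  have supp: "{\<alpha>. c0 \<alpha> \<noteq> 0} \<subseteq> I" by (auto simp: c0_def split: if_splits)
  show ?thesis
  proof (intro exI[of _ c0] conjI allI impI)
    show "poly12 c0" unfolding poly12_def
      using finite_subset[OF supp finI] supp by (auto simp: I_def Box_def)
    show "\<exists>\<alpha>. c0 \<alpha> \<noteq> 0" using c(1) by (auto simp: c0_def)
    fix f2 f3 f4 assume T: "in_T f2 f3 f4"
    from key_param2[OF T] obtain k u where k: "k < 3" and u: "\<And>i. i < 12 \<Longrightarrow> triple_coords f2 f3 f4 i = coordsF k u i"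
      by blast
    have gk: "g \<alpha> (k, u) = (\<Prod>i<12. coordsF k u i ^ \<alpha> i)" for \<alpha>
    proof -
      have "g \<alpha> (k, u) = (\<Sum>k0<3. liftS k0 (\<lambda>u. \<Prod>i<12. coordsF k0 u i ^ \<alpha> i) (k, u))"
        unfolding g_def by (simp add: sum_fun_apply)
      also have "\<dots> = (\<Sum>k0\<in>{k}. liftS k0 (\<lambda>u. \<Prod>i<12. coordsF k0 u i ^ \<alpha> i) (k, u))"
        by (rule sum.mono_neutral_right) (use k in \<open>auto simp: liftS_def\<close>)
      finally show ?thesis by (simp add: liftS_def)
    qed
    have "eval12 c0 (triple_coords f2 f3 f4) = (\<Sum>\<alpha>\<in>I. c0 \<alpha> * (\<Prod>i<12. triple_coords f2 f3 f4 i ^ \<alpha> i))"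
      unfolding eval12_def by (rule sum.mono_neutral_left[OF finI supp]) auto
    also have "\<dots> = (\<Sum>\<alpha>\<in>I. c \<alpha> * g \<alpha> (k, u))"
      by (rule sum.cong) (auto simp: c0_def gk u)
    also have "\<dots> = 0" by (rule c(2))
    finally show "eval12 c0 (triple_coords f2 f3 f4) = 0" .
  qed
qed

end
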